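(* Let $I$ be a squarefree monomial ideal in a polynomial ring $S$ over a field that is nearly a complete intersection (NCI), and let $F$ be a minimal monomial generator of $I$. Then $F$ has a nontrivial common factor with some other minimal monomial generator of $I$.
   Context: An ideal is a complete intersection (CI) if it is generated by a regular sequence. The support of a monomial ideal is the set of variables appearing in at least one minimal monomial generator. For a squarefree monomial ideal $I$ and a variable $x$, $I(x=1)$ denotes the ideal generated by the monomials obtained from the minimal monomial generators of $I$ by setting $x = 1$. A squarefree monomial ideal $I$ is NCI if it is generated in degree at least two, is not a CI, and for each variable $x$ in the support of $I$, $I(x=1)$ is a CI. *)

theory Defs
  imports "HOL-Library.Poly_Mapping"
begin

text \<open>The polynomial ring S over a field k is modelled as exponent vectors (finitely supported maps from variables to nat) mapped to coefficients.\<close>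
type_synonym ('v, 'k) mpoly = "('v \<Rightarrow>\<^sub>0 nat) \<Rightarrow>\<^sub>0 'k"

definition gen_ideal :: "'a::comm_ring_1 set \<Rightarrow> 'a set" where
  "gen_ideal G = {x. \<exists>A c. finite A \<and> A \<subseteq> G \<and> x = (\<Sum>g\<in>A. c g * g)}"

definition regular_seq :: "'a::comm_ring_1 list \<Rightarrow> bool" where
  "regular_seq fs \<longleftrightarrow>
     (\<forall>i < length fs. \<forall>a. a * fs ! i \<in> gen_ideal (set (take i fs))
          \<longrightarrow> a \<in> gen_ideal (set (take i fs)))
     \<and> 1 \<notin> gen_ideal (set fs)"

definition is_CI :: "'a::comm_ring_1 set \<Rightarrow> bool" where
  "is_CI I \<longleftrightarrow> (\<exists>fs. regular_seq fs \<and> gen_ideal (set fs) = I)"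

definition monom :: "('v \<Rightarrow>\<^sub>0 nat) \<Rightarrow> ('v, 'k::field) mpoly" where
  "monom m = Poly_Mapping.single m 1"

definition squarefree_exp :: "('v \<Rightarrow>\<^sub>0 nat) \<Rightarrow> bool" where
  "squarefree_exp m \<longleftrightarrow> (\<forall>v. Poly_Mapping.lookup m v \<le> 1)"

definition total_deg :: "('v \<Rightarrow>\<^sub>0 nat) \<Rightarrow> nat" where
  "total_deg m = (\<Sum>v\<in>Poly_Mapping.keys m. Poly_Mapping.lookup m v)"

definition sqfree_monomial_ideal :: "('v, 'k::field) mpoly set \<Rightarrow> bool" where
  "sqfree_monomial_ideal I \<longleftrightarrow>
     (\<exists>E. (\<forall>m\<in>E. squarefree_exp m) \<and> I = gen_ideal (monom ` E))"

definition mingen_exps :: "('v, 'k::field) mpoly set \<Rightarrow> ('v \<Rightarrow>\<^sub>0 nat) set" where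
  "mingen_exps I = {m. (monom m :: ('v,'k) mpoly) \<in> I \<and>
      (\<forall>m'. (monom m' :: ('v,'k) mpoly) \<in> I \<longrightarrow> monom m' dvd (monom m :: ('v,'k) mpoly)
             \<longrightarrow> m' = m)}"

definition mingens :: "('v, 'k::field) mpoly set \<Rightarrow> ('v, 'k) mpoly set" where
  "mingens I = monom ` mingen_exps I"

definition supp_ideal :: "('v, 'k::field) mpoly set \<Rightarrow> 'v set" where
  "supp_ideal I = (\<Union>m\<in>mingen_exps I. Poly_Mapping.keys m)"

definition set_var_one :: "'v \<Rightarrow> ('v, 'k::field) mpoly set \<Rightarrow> ('v, 'k) mpoly set" where
  "set_var_one x I = gen_ideal ((\<lambda>m. monom (Poly_Mapping.update x 0 m)) ` mingen_exps I)"

definition is_NCI :: "('v, 'k::field) mpoly set \<Rightarrow> bool" where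
  "is_NCI I \<longleftrightarrow> sqfree_monomial_ideal I
     \<and> (\<forall>m\<in>mingen_exps I. total_deg m \<ge> 2)
     \<and> \<not> is_CI I
     \<and> (\<forall>x\<in>supp_ideal I. is_CI (set_var_one x I))"

end

theory Submission
  imports Defs
begin


abbreviation lk where "lk \<equiv> Poly_Mapping.lookup"
abbreviation sg where "sg \<equiv> Poly_Mapping.single"

lemma lookup_single_mult_add:
  fixes q :: "('a::cancel_comm_monoid_add) \<Rightarrow>\<^sub>0 ('b::semiring_1)"
  shows "lk (sg a c * q) (a + d) = c * lk q d"
proof -
  have "lk (sg a c * q) (a + d)
     = (\<Sum>l. (c when a = l) * (\<Sum>q'. lk q q' when a + d = l + q'))"
    by (simp add: lookup_mult lookup_single)
  also have "\<dots> = c * (\<Sum>q'. lk q q' when a + d = a + q')"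
    by (simp add: when_mult)
  also have "(\<lambda>q'. lk q q' when a + d = a + q') = (\<lambda>q'. lk q q' when d = q')"
    by (auto simp: fun_eq_iff)
  finally show ?thesis by simp
qed

lemma lookup_single_mult_nodvd:
  fixes q :: "('a::cancel_comm_monoid_add) \<Rightarrow>\<^sub>0 ('b::semiring_1)"
  assumes "\<And>d. k \<noteq> a + d"
  shows "lk (sg a c * q) k = 0"
proof -
  have "lk (sg a c * q) k
     = (\<Sum>l. (c when a = l) * (\<Sum>q'. lk q q' when k = l + q'))"
    by (simp add: lookup_mult lookup_single)
  also have "\<dots> = c * (\<Sum>q'. lk q q' when k = a + q')"
    by (simp add: when_mult)
  also have "(\<lambda>q'. lk q q' when k = a + q') = (\<lambda>q'. 0)"
    using assms by (auto simp: fun_eq_iff)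
  finally show ?thesis by simp
qed

definition C :: "'k::field \<Rightarrow> ('v, 'k) mpoly" where "C c = sg 0 c"
definition var :: "'v \<Rightarrow> ('v, 'k::field) mpoly" where "var v = monom (sg v 1)"

lemma monom_add: "(monom (a + b) :: ('v,'k::field) mpoly) = monom a * monom b"
  by (simp add: monom_def mult_single)

lemma monom_zero: "(monom 0 :: ('v,'k::field) mpoly) = 1"
  by (simp add: monom_def)

lemma C_mult: "C (a * b) = (C a * C b :: ('v,'k::field) mpoly)"
  by (simp add: C_def mult_single)
lemma C_add: "C (a + b) = (C a + C b :: ('v,'k::field) mpoly)"
  by (simp add: C_def single_add)
lemma C_1: "C 1 = (1 :: ('v,'k::field) mpoly)" by (simp add: C_def)
lemma C_0: "C 0 = (0 :: ('v,'k::field) mpoly)" by (simp add: C_def)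
lemma C_monom: "C c * monom m = (sg m c :: ('v,'k::field) mpoly)"
  by (simp add: C_def monom_def mult_single)

lemma monom_inj: "(monom a :: ('v,'k::field) mpoly) = monom b \<Longrightarrow> a = b"
  unfolding monom_def by (metis lookup_single_eq lookup_single_not_eq one_neq_zero)

lemma monom_dvd_exp:
  assumes "(monom a :: ('v,'k::field) mpoly) dvd monom b"
  shows "\<exists>d. b = a + d"
proof (rule ccontr)
  assume nd: "\<not> (\<exists>d. b = a + d)"
  from assms obtain q where q: "(monom b :: ('v,'k) mpoly) = monom a * q" by (auto elim: dvdE)
  have "lk (monom b :: ('v,'k) mpoly) b = 1" by (simp add: monom_def)
  moreover have "lk (monom a * q) b = 0"
    unfolding monom_def by (rule lookup_single_mult_nodvd) (use nd in auto)
  ultimately show False using q by simp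
qed

lemma exp_dvd_monom: "b = a + d \<Longrightarrow> (monom a :: ('v,'k::field) mpoly) dvd monom b"
  by (simp add: monom_add)

lemma poly_sum_singles:
  "p = (\<Sum>m\<in>Poly_Mapping.keys p. sg m (lk p m))"
  by (rule poly_mapping_eqI) (auto simp: lookup_sum lookup_single when_def in_keys_iff sum.delta)

lemma poly_induct [case_names zero add single]:
  fixes p :: "'a \<Rightarrow>\<^sub>0 'b::comm_monoid_add"
  assumes "P 0" "\<And>p q. P p \<Longrightarrow> P q \<Longrightarrow> P (p + q)" "\<And>m c. P (sg m c)"
  shows "P p"
proof -
  have "\<And>K. finite K \<Longrightarrow> P (\<Sum>m\<in>K. sg m (lk p m))"
  proof -
    fix K :: "'a set" assume "finite K"
    then show "P (\<Sum>m\<in>K. sg m (lk p m))"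
      by (induction K rule: finite_induct) (auto intro: assms)
  qed
  then show ?thesis by (metis poly_sum_singles finite_keys)
qed



definition mv :: "('v::finite \<Rightarrow> ('v, 'k::field) mpoly) \<Rightarrow> ('v \<Rightarrow>\<^sub>0 nat) \<Rightarrow> ('v,'k) mpoly" where
  "mv \<sigma> m = (\<Prod>v\<in>UNIV. \<sigma> v ^ lk m v)"

definition subst :: "('v::finite \<Rightarrow> ('v, 'k::field) mpoly) \<Rightarrow> ('v,'k) mpoly \<Rightarrow> ('v,'k) mpoly" where
  "subst \<sigma> p = (\<Sum>m\<in>Poly_Mapping.keys p. C (lk p m) * mv \<sigma> m)"

lemma mv_add: "mv \<sigma> (a + b) = mv \<sigma> a * mv \<sigma> b"
  by (simp add: mv_def lookup_add power_add prod.distrib)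

lemma mv_zero: "mv \<sigma> 0 = 1"
  by (simp add: mv_def)

lemma subst_superset:
  assumes "finite K" "Poly_Mapping.keys p \<subseteq> K"
  shows "subst \<sigma> p = (\<Sum>m\<in>K. C (lk p m) * mv \<sigma> m)"
  unfolding subst_def
  by (rule sum.mono_neutral_left) (use assms in \<open>auto simp: C_0 in_keys_iff\<close>)

lemma subst_add: "subst \<sigma> (p + q) = subst \<sigma> p + subst \<sigma> q"
proof -
  let ?K = "Poly_Mapping.keys p \<union> Poly_Mapping.keys q"
  have "Poly_Mapping.keys (p + q) \<subseteq> ?K" by (rule keys_add)
  then have "subst \<sigma> (p + q) = (\<Sum>m\<in>?K. C (lk (p+q) m) * mv \<sigma> m)"
    by (intro subst_superset) auto
  also have "\<dots> = (\<Sum>m\<in>?K. C (lk p m) * mv \<sigma> m) + (\<Sum>m\<in>?K. C (lk q m) * mv \<sigma> m)"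
    by (simp add: lookup_add C_add distrib_right sum.distrib)
  also have "\<dots> = subst \<sigma> p + subst \<sigma> q"
    by (simp add: subst_superset[of ?K p] subst_superset[of ?K q])
  finally show ?thesis .
qed

lemma subst_zero: "subst \<sigma> 0 = 0"
  by (simp add: subst_def)

lemma subst_single: "subst \<sigma> (sg m c) = C c * mv \<sigma> m"
proof -
  have "subst \<sigma> (sg m c) = (\<Sum>m'\<in>{m}. C (lk (sg m c) m') * mv \<sigma> m')"
    by (rule subst_superset) auto
  then show ?thesis by simp
qed

lemma subst_mult: "subst \<sigma> (p * q) = subst \<sigma> p * subst \<sigma> q"
proof (induction p rule: poly_induct)
  case zero then show ?case by (simp add: subst_zero)
next
  case (add p1 p2) then show ?case by (simp add: distrib_right subst_add)
next
  case (single m c)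
  show ?case
  proof (induction q rule: poly_induct)
    case zero then show ?case by (simp add: subst_zero)
  next
    case (add q1 q2) then show ?case by (simp add: distrib_left subst_add)
  next
    case (single m' c')
    show ?case by (simp add: mult_single subst_single C_mult mv_add mult_ac)
  qed
qed

lemma subst_1: "subst \<sigma> 1 = 1"
  by (metis single_one subst_single mv_zero C_1 mult_1)

lemma subst_C: "subst \<sigma> (C c) = C c"
  by (simp add: C_def subst_single mv_zero)

lemma subst_uminus: "subst \<sigma> (- p) = - subst \<sigma> p"
  by (metis add_eq_0_iff2 subst_add subst_zero)

lemma subst_diff: "subst \<sigma> (p - q) = subst \<sigma> p - subst \<sigma> q"
  by (metis diff_conv_add_uminus subst_add subst_uminus)

lemma subst_sum: "subst \<sigma> (sum f A) = (\<Sum>a\<in>A. subst \<sigma> (f a))"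
  by (induction A rule: infinite_finite_induct) (auto simp: subst_zero subst_add)

lemma subst_prod: "subst \<sigma> (prod f A) = (\<Prod>a\<in>A. subst \<sigma> (f a))"
  by (induction A rule: infinite_finite_induct) (auto simp: subst_1 subst_mult)

lemma subst_power: "subst \<sigma> (p ^ n) = subst \<sigma> p ^ n"
  by (induction n) (auto simp: subst_1 subst_mult)

lemma mv_single1: "mv \<sigma> (sg v 1) = \<sigma> v"
proof -
  have "mv \<sigma> (sg v 1) = (\<Prod>w\<in>UNIV. if w = v then \<sigma> v else 1)"
    unfolding mv_def by (rule prod.cong) (auto simp: lookup_single)
  then show ?thesis by simp
qed

lemma subst_var: "subst \<sigma> (var v) = \<sigma> v"
  by (simp only: var_def monom_def subst_single C_1 mv_single1 mult_1)

lemma monom_single_pow: "(monom (sg v n) :: ('v,'k::field) mpoly) = var v ^ n"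
proof (induction n)
  case 0 then show ?case by (simp add: monom_zero)
next
  case (Suc n)
  have "sg v (Suc n) = sg v 1 + sg v n" by (simp add: single_add[symmetric])
  then show ?case using Suc by (simp add: monom_add var_def)
qed

lemma monom_eq_mv: "(monom m :: ('v::finite,'k::field) mpoly) = mv var m"
proof -
  have m: "m = (\<Sum>v\<in>UNIV. sg v (lk m v))"
    by (rule poly_mapping_eqI) (simp add: lookup_sum lookup_single when_def)
  have "\<And>A. (monom (\<Sum>v\<in>A. sg v (lk m v)) :: ('v,'k) mpoly) = (\<Prod>v\<in>A. var v ^ lk m v)"
  proof -
    fix A :: "'v set"
    show "(monom (\<Sum>v\<in>A. sg v (lk m v)) :: ('v,'k) mpoly) = (\<Prod>v\<in>A. var v ^ lk m v)"
      by (induction A rule: infinite_finite_induct) (auto simp: monom_zero monom_add monom_single_pow)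
  qed
  then show ?thesis by (metis m mv_def)
qed

lemma subst_monom: "subst \<sigma> (monom m) = mv \<sigma> m"
  by (simp add: monom_def subst_single C_1)

lemma subst_var_id: "subst var p = p"
proof (induction p rule: poly_induct)
  case zero then show ?case by (simp add: subst_zero)
next
  case (add p q) then show ?case by (simp add: subst_add)
next
  case (single m c) then show ?case by (simp add: subst_single monom_eq_mv[symmetric] C_monom)
qed

lemma subst_subst: "subst \<tau> (subst \<sigma> p) = subst (\<lambda>v. subst \<tau> (\<sigma> v)) p"
proof (induction p rule: poly_induct)
  case zero then show ?case by (simp add: subst_zero)
next
  case (add p q) then show ?case by (simp add: subst_add)
next
  case (single m c)
  then show ?case by (simp add: subst_single subst_mult subst_C mv_def subst_prod subst_power)
qed

lemma subst_cong: "(\<And>v. \<sigma> v = \<tau> v) \<Longrightarrow> subst \<sigma> p = subst \<tau> p"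
  by (metis ext)



lemma gen_ideal_intro:
  "finite A \<Longrightarrow> A \<subseteq> G \<Longrightarrow> x = (\<Sum>g\<in>A. c g * g) \<Longrightarrow> x \<in> gen_ideal G"
  unfolding gen_ideal_def by blast

lemma gen_ideal_elim:
  assumes "x \<in> gen_ideal G"
  obtains A c where "finite A" "A \<subseteq> G" "x = (\<Sum>g\<in>A. c g * g)"
  using assms unfolding gen_ideal_def by blast

lemma gen_ideal_0: "0 \<in> gen_ideal G"
  unfolding gen_ideal_def by (rule CollectI, rule exI[of _ "{}"]) auto

lemma gen_ideal_base: "g \<in> G \<Longrightarrow> g \<in> gen_ideal G"
  unfolding gen_ideal_def by (intro CollectI exI[of _ "{g}"] exI[of _ "\<lambda>_. 1"]) auto

lemma gen_ideal_add:
  assumes "x \<in> gen_ideal G" "y \<in> gen_ideal G"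
  shows "x + y \<in> gen_ideal G"
proof -
  from assms(1) obtain A c where A: "finite A" "A \<subseteq> G" "x = (\<Sum>g\<in>A. c g * g)"
    by (rule gen_ideal_elim)
  from assms(2) obtain B d where B: "finite B" "B \<subseteq> G" "y = (\<Sum>g\<in>B. d g * g)"
    by (rule gen_ideal_elim)
  define e where "e g = (if g \<in> A then c g else 0) + (if g \<in> B then d g else 0)" for g
  have "(\<Sum>g\<in>A \<union> B. e g * g) = (\<Sum>g\<in>A \<union> B. (if g \<in> A then c g else 0) * g) + (\<Sum>g\<in>A \<union> B. (if g \<in> B then d g else 0) * g)"
    by (simp add: e_def distrib_right sum.distrib)
  also have "(\<Sum>g\<in>A \<union> B. (if g \<in> A then c g else 0) * g) = (\<Sum>g\<in>A. c g * g)"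
    by (rule sum.mono_neutral_cong_right) (use A B in auto)
  also have "(\<Sum>g\<in>A \<union> B. (if g \<in> B then d g else 0) * g) = (\<Sum>g\<in>B. d g * g)"
    by (rule sum.mono_neutral_cong_right) (use A B in auto)
  finally have "x + y = (\<Sum>g\<in>A \<union> B. e g * g)" using A(3) B(3) by simp
  moreover have "finite (A \<union> B)" "A \<union> B \<subseteq> G" using A B by auto
  ultimately show ?thesis by (intro gen_ideal_intro)
qed

lemma gen_ideal_mult:
  assumes "x \<in> gen_ideal G"
  shows "r * x \<in> gen_ideal G"
proof -
  from assms obtain A c where A: "finite A" "A \<subseteq> G" "x = (\<Sum>g\<in>A. c g * g)"
    by (rule gen_ideal_elim)
  have "r * x = (\<Sum>g\<in>A. (r * c g) * g)" unfolding A(3) by (simp add: sum_distrib_left mult.assoc)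
  then show ?thesis using A(1,2) by (intro gen_ideal_intro)
qed

lemma gen_ideal_uminus: "x \<in> gen_ideal G \<Longrightarrow> - x \<in> gen_ideal G"
  using gen_ideal_mult[of x G "-1"] by simp

lemma gen_ideal_diff: "x \<in> gen_ideal G \<Longrightarrow> y \<in> gen_ideal G \<Longrightarrow> x - y \<in> gen_ideal G"
  by (metis diff_conv_add_uminus gen_ideal_add gen_ideal_uminus)

lemma gen_ideal_sum:
  "(\<And>a. a \<in> A \<Longrightarrow> f a \<in> gen_ideal G) \<Longrightarrow> sum f A \<in> gen_ideal G"
  by (induction A rule: infinite_finite_induct) (auto simp: gen_ideal_0 gen_ideal_add)

lemma gen_ideal_subset:
  assumes "G \<subseteq> gen_ideal H"
  shows "gen_ideal G \<subseteq> gen_ideal H"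
proof
  fix x assume "x \<in> gen_ideal G"
  then obtain A c where A: "finite A" "A \<subseteq> G" "x = (\<Sum>g\<in>A. c g * g)"
    by (rule gen_ideal_elim)
  show "x \<in> gen_ideal H" unfolding A(3)
    by (rule gen_ideal_sum, rule gen_ideal_mult) (use A assms in auto)
qed

lemma gen_ideal_mono: "G \<subseteq> H \<Longrightarrow> gen_ideal G \<subseteq> gen_ideal H"
  by (meson gen_ideal_base gen_ideal_subset subset_iff)

definition is_hom :: "('a::comm_ring_1 \<Rightarrow> 'a) \<Rightarrow> bool" where
  "is_hom \<theta> \<longleftrightarrow> (\<forall>a b. \<theta> (a + b) = \<theta> a + \<theta> b) \<and> (\<forall>a b. \<theta> (a * b) = \<theta> a * \<theta> b) \<and> \<theta> 1 = 1"

lemma hom_add: "is_hom \<theta> \<Longrightarrow> \<theta> (a + b) = \<theta> a + \<theta> b" by (simp add: is_hom_def)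
lemma hom_mult: "is_hom \<theta> \<Longrightarrow> \<theta> (a * b) = \<theta> a * \<theta> b" by (simp add: is_hom_def)
lemma hom_1: "is_hom \<theta> \<Longrightarrow> \<theta> 1 = 1" by (simp add: is_hom_def)
lemma hom_0: "is_hom \<theta> \<Longrightarrow> \<theta> 0 = 0"
  by (metis add_cancel_right_right add_0 hom_add)
lemma hom_uminus: "is_hom \<theta> \<Longrightarrow> \<theta> (- a) = - \<theta> a"
  by (metis add_eq_0_iff2 hom_add hom_0)
lemma hom_diff: "is_hom \<theta> \<Longrightarrow> \<theta> (a - b) = \<theta> a - \<theta> b"
  by (metis diff_conv_add_uminus hom_add hom_uminus)
lemma hom_sum: "is_hom \<theta> \<Longrightarrow> \<theta> (sum f A) = (\<Sum>a\<in>A. \<theta> (f a))"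
  by (induction A rule: infinite_finite_induct) (auto simp: hom_0 hom_add)

lemma gen_ideal_hom:
  assumes "is_hom \<theta>" "x \<in> gen_ideal G"
  shows "\<theta> x \<in> gen_ideal (\<theta> ` G)"
proof -
  from assms(2) obtain A c where A: "finite A" "A \<subseteq> G" "x = (\<Sum>g\<in>A. c g * g)"
    by (rule gen_ideal_elim)
  have "\<theta> x = (\<Sum>g\<in>A. \<theta> (c g) * \<theta> g)" using A assms(1) by (simp add: hom_sum hom_mult)
  also have "\<dots> \<in> gen_ideal (\<theta> ` G)"
    by (rule gen_ideal_sum, rule gen_ideal_mult, rule gen_ideal_base) (use A(2) in blast)
  finally show ?thesis .
qed

lemma gen_ideal_hom_eq:
  assumes "is_hom \<theta>" "gen_ideal G = gen_ideal H"
  shows "gen_ideal (\<theta> ` G) = gen_ideal (\<theta> ` H)"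
proof -
  have *: "gen_ideal (\<theta> ` G) \<subseteq> gen_ideal (\<theta> ` H)" if "gen_ideal G = gen_ideal H" for G H
  proof (rule gen_ideal_subset, rule subsetI)
    fix z assume "z \<in> \<theta> ` G"
    then obtain g where g: "g \<in> G" "z = \<theta> g" by blast
    then have "g \<in> gen_ideal H" using that gen_ideal_base by blast
    then show "z \<in> gen_ideal (\<theta> ` H)" using g gen_ideal_hom[OF assms(1)] by blast
  qed
  show ?thesis using *[of G H] *[of H G] assms(2) by auto
qed

lemma transfer_key:
  assumes hom: "is_hom \<theta>"
    and ex: "\<And>s. \<exists>a b. s = \<theta> a + \<theta> b * Y"
    and un: "\<And>a b. \<theta> a + \<theta> b * Y = 0 \<Longrightarrow> a = 0 \<and> b = 0"
    and mem: "\<theta> a + \<theta> b * Y \<in> gen_ideal (\<theta> ` G)"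
  shows "a \<in> gen_ideal G \<and> b \<in> gen_ideal G"
proof -
  from mem obtain A c where A: "finite A" "A \<subseteq> \<theta> ` G" "\<theta> a + \<theta> b * Y = (\<Sum>g\<in>A. c g * g)"
    by (rule gen_ideal_elim)
  define pre where "pre g = (SOME h. h \<in> G \<and> \<theta> h = g)" for g
  have pre: "pre g \<in> G \<and> \<theta> (pre g) = g" if "g \<in> A" for g
    unfolding pre_def by (rule someI_ex) (use that A in blast)
  define \<alpha> where "\<alpha> g = (SOME a. \<exists>b. c g = \<theta> a + \<theta> b * Y)" for g
  define \<beta> where "\<beta> g = (SOME b. c g = \<theta> (\<alpha> g) + \<theta> b * Y)" for g
  have dec: "c g = \<theta> (\<alpha> g) + \<theta> (\<beta> g) * Y" for g
  proof -
    have "\<exists>b. c g = \<theta> (\<alpha> g) + \<theta> b * Y"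
      unfolding \<alpha>_def by (rule someI_ex) (use ex in blast)
    then show ?thesis unfolding \<beta>_def by (rule someI_ex)
  qed
  let ?sa = "\<Sum>g\<in>A. \<alpha> g * pre g" and ?sb = "\<Sum>g\<in>A. \<beta> g * pre g"
  have "(\<Sum>g\<in>A. c g * g) = (\<Sum>g\<in>A. \<theta> (\<alpha> g * pre g) + \<theta> (\<beta> g * pre g) * Y)"
  proof (rule sum.cong)
    fix g assume "g \<in> A"
    then have pg: "\<theta> (pre g) = g" using pre by blast
    show "c g * g = \<theta> (\<alpha> g * pre g) + \<theta> (\<beta> g * pre g) * Y"
      unfolding hom_mult[OF hom] pg dec by (simp add: algebra_simps)
  qed simp
  also have "\<dots> = \<theta> ?sa + \<theta> ?sb * Y"
    by (simp add: sum.distrib hom_sum[OF hom] sum_distrib_right)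
  finally have "\<theta> (a - ?sa) + \<theta> (b - ?sb) * Y = 0"
    using A(3) by (simp add: hom_diff[OF hom] algebra_simps)
  from un[OF this] have "a = ?sa" "b = ?sb" by auto
  moreover have "?sa \<in> gen_ideal G" "?sb \<in> gen_ideal G"
    by (rule gen_ideal_sum, rule gen_ideal_mult, rule gen_ideal_base, use pre in auto)+
  ultimately show ?thesis by simp
qed

lemma transfer_regular:
  assumes hom: "is_hom \<theta>"
    and ex: "\<And>s. \<exists>a b. s = \<theta> a + \<theta> b * Y"
    and un: "\<And>a b. \<theta> a + \<theta> b * Y = 0 \<Longrightarrow> a = 0 \<and> b = 0"
    and reg: "regular_seq fs"
  shows "regular_seq (map \<theta> fs)"
  unfolding regular_seq_def
proof (intro conjI allI impI)
  fix i u assume i: "i < length (map \<theta> fs)"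
    and m: "u * map \<theta> fs ! i \<in> gen_ideal (set (take i (map \<theta> fs)))"
  let ?G = "set (take i fs)"
  have G: "set (take i (map \<theta> fs)) = \<theta> ` ?G" by (simp add: take_map)
  obtain a b where u: "u = \<theta> a + \<theta> b * Y" using ex by blast
  have "u * map \<theta> fs ! i = \<theta> (a * fs ! i) + \<theta> (b * fs ! i) * Y"
    using i by (simp add: u hom_mult[OF hom] algebra_simps)
  with m G have "a * fs ! i \<in> gen_ideal ?G \<and> b * fs ! i \<in> gen_ideal ?G"
    by (intro transfer_key[OF hom ex un]) auto
  then have "a \<in> gen_ideal ?G" "b \<in> gen_ideal ?G"
    using reg i unfolding regular_seq_def by auto
  then have "\<theta> a \<in> gen_ideal (\<theta> ` ?G)" "\<theta> b \<in> gen_ideal (\<theta> ` ?G)"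
    by (auto intro: gen_ideal_hom[OF hom])
  moreover have "\<theta> b * Y \<in> gen_ideal (\<theta> ` ?G)"
    using gen_ideal_mult[OF \<open>\<theta> b \<in> _\<close>, of Y] by (simp add: mult.commute)
  ultimately show "u \<in> gen_ideal (set (take i (map \<theta> fs)))"
    unfolding G u by (intro gen_ideal_add)
next
  show "1 \<notin> gen_ideal (set (map \<theta> fs))"
  proof
    assume "1 \<in> gen_ideal (set (map \<theta> fs))"
    then have "\<theta> 1 + \<theta> 0 * Y \<in> gen_ideal (\<theta> ` set fs)"
      by (simp add: hom_1[OF hom] hom_0[OF hom])
    then have "1 \<in> gen_ideal (set fs)" using transfer_key[OF hom ex un] by blast
    then show False using reg unfolding regular_seq_def by blast
  qed
qed



lemma is_hom_subst: "is_hom (subst \<sigma>)"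
  by (simp add: is_hom_def subst_add subst_mult subst_1)

lemma var_mult_lookup: "lk (var v * p) (sg v 1 + d) = lk p d"
  unfolding var_def monom_def by (simp add: lookup_single_mult_add)

lemma var_mult_zero: "var v * (p :: ('v,'k::field) mpoly) = 0 \<Longrightarrow> p = 0"
proof (rule poly_mapping_eqI)
  fix d assume "var v * p = 0"
  have "lk p d = lk (var v * p) (sg v 1 + d)" by (rule var_mult_lookup[symmetric])
  then show "lk p d = lk 0 d" using \<open>var v * p = 0\<close> by simp
qed

lemma var_mult_keys: "d \<in> Poly_Mapping.keys p \<Longrightarrow> sg v 1 + d \<in> Poly_Mapping.keys (var v * (p :: ('v,'k::field) mpoly))"
  using var_mult_lookup[of v p d] by (simp add: in_keys_iff)

definition kill :: "'v \<Rightarrow> ('v::finite,'k::field) mpoly \<Rightarrow> ('v,'k) mpoly" where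
  "kill v = subst (\<lambda>w. if w = v then 0 else var w)"

lemma kill_single:
  "kill v (sg m c) = (if lk m v = 0 then sg m c else (0 :: ('v::finite,'k::field) mpoly))"
proof -
  have "mv (\<lambda>w. if w = v then 0 else var w) m = (if lk m v = 0 then mv var m else (0::('v,'k) mpoly))"
  proof (cases "lk m v = 0")
    case True
    then show ?thesis unfolding mv_def by (auto intro!: prod.cong)
  next
    case False
    have "(\<Prod>w\<in>UNIV. (if w = v then 0 else var w) ^ lk m w) = (0::('v,'k) mpoly)"
    proof (rule prod_zero)
      show "\<exists>a\<in>UNIV. (if a = v then 0 else var a) ^ lk m a = (0::('v,'k) mpoly)"
        using False by (intro bexI[of _ v]) (auto simp: power_0_left)
    qed simp
    then show ?thesis using False unfolding mv_def by simp
  qed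
  then show ?thesis
    by (simp add: kill_def subst_single monom_eq_mv[symmetric] C_monom C_0)
qed

lemma kill_zero_keys:
  assumes "kill v p = 0" "m \<in> Poly_Mapping.keys p"
  shows "lk m v \<noteq> 0"
proof
  assume m0: "lk m v = 0"
  have "kill v p = (\<Sum>m'\<in>Poly_Mapping.keys p. kill v (sg m' (lk p m')))"
    by (subst poly_sum_singles) (simp add: kill_def subst_sum)
  also have "\<dots> = (\<Sum>m'\<in>Poly_Mapping.keys p. if lk m' v = 0 then sg m' (lk p m') else 0)"
    by (simp add: kill_single)
  finally have "lk (kill v p) m = (\<Sum>m'\<in>Poly_Mapping.keys p. lk (if lk m' v = 0 then sg m' (lk p m') else 0) m)"
    by (simp add: lookup_sum)
  also have "\<dots> = (\<Sum>m'\<in>Poly_Mapping.keys p. if m' = m then lk p m else 0)"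
    by (rule sum.cong) (auto simp: lookup_single when_def m0)
  also have "\<dots> = lk p m" using assms(2) by simp
  finally show False using assms by (simp add: in_keys_iff)
qed

lemma kill_zero_dvd:
  assumes "kill v p = 0"
  shows "\<exists>p'. p = var v * p'"
proof -
  define p' where "p' = (\<Sum>m\<in>Poly_Mapping.keys p. sg (m - sg v 1) (lk p m))"
  have "var v * p' = (\<Sum>m\<in>Poly_Mapping.keys p. sg (sg v 1 + (m - sg v 1)) (lk p m))"
    by (simp add: p'_def sum_distrib_left var_def monom_def mult_single)
  also have "\<dots> = (\<Sum>m\<in>Poly_Mapping.keys p. sg m (lk p m))"
  proof (rule sum.cong)
    fix m assume "m \<in> Poly_Mapping.keys p"
    then have "lk m v \<noteq> 0" using kill_zero_keys[OF assms] by blast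
    then have "sg v 1 + (m - sg v 1) = m"
      by (intro poly_mapping_eqI) (auto simp: lookup_add lookup_minus lookup_single when_def)
    then show "sg (sg v 1 + (m - sg v 1)) (lk p m) = sg m (lk p m)" by simp
  qed simp
  also have "\<dots> = p" by (rule poly_sum_singles[symmetric])
  finally show ?thesis by (intro exI[of _ p']) simp
qed

lemma keys_bound_div:
  assumes "p = var v * p'" "\<forall>m\<in>Poly_Mapping.keys p. lk m v < Suc n"
  shows "\<forall>m\<in>Poly_Mapping.keys p'. lk m v < n"
proof
  fix d assume "d \<in> Poly_Mapping.keys p'"
  then have "sg v 1 + d \<in> Poly_Mapping.keys p" unfolding assms(1) by (rule var_mult_keys)
  then have "lk (sg v 1 + d) v < Suc n" using assms(2) by blast
  then show "lk d v < n" by (simp add: lookup_add)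
qed

lemma keys_bound_ex: "\<exists>n. \<forall>m\<in>Poly_Mapping.keys (p::('v,'k::field) mpoly). lk m v < n"
proof -
  let ?S = "(\<lambda>m. lk m v) ` Poly_Mapping.keys p"
  have "finite ?S" by simp
  then have "\<forall>m\<in>Poly_Mapping.keys p. lk m v < Suc (Max ?S)"
    by (simp add: le_imp_less_Suc)
  then show ?thesis by (rule exI)
qed



definition thsig :: "'v \<Rightarrow> 'v \<Rightarrow> 'v \<Rightarrow> ('v::finite,'k::field) mpoly" where
  "thsig x y v = (if v = x then var x + var y else if v = y then var x * var y else var v)"

definition swp :: "'v \<Rightarrow> 'v \<Rightarrow> 'v \<Rightarrow> ('v::finite,'k::field) mpoly" where
  "swp x y v = (if v = x then var y else if v = y then var x else var v)"

lemma kill_th: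
  assumes "x \<noteq> y"
  shows "kill y (subst (thsig x y) p) = kill y (p :: ('v::finite,'k::field) mpoly)"
proof -
  have "(\<lambda>v. kill y (thsig x y v)) = (\<lambda>w. if w = y then 0 else (var w :: ('v,'k) mpoly))"
    using assms by (auto simp: fun_eq_iff kill_def thsig_def subst_add subst_mult subst_var)
  then show ?thesis unfolding kill_def[of y] by (simp add: subst_subst)
qed

lemma th_inj_aux:
  assumes "x \<noteq> y"
  shows "\<forall>p::('v::finite,'k::field) mpoly. (\<forall>m\<in>Poly_Mapping.keys p. lk m y < n) \<longrightarrow> subst (thsig x y) p = 0 \<longrightarrow> p = 0"
proof (induction n)
  case 0 then show ?case by auto
next
  case (Suc n)
  show ?case
  proof (intro allI impI)
    fix p :: "('v,'k) mpoly"
    assume b: "\<forall>m\<in>Poly_Mapping.keys p. lk m y < Suc n" and z: "subst (thsig x y) p = 0"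
    have "kill y p = 0" using kill_th[OF assms, of p] z by (simp add: kill_def subst_zero)
    then obtain p' where p': "p = var y * p'" using kill_zero_dvd by blast
    have "subst (thsig x y) p = var x * (var y * subst (thsig x y) p')"
      using assms by (simp add: p' subst_mult subst_var thsig_def mult.assoc)
    then have "subst (thsig x y) p' = 0" using z var_mult_zero by metis
    moreover have "\<forall>m\<in>Poly_Mapping.keys p'. lk m y < n" by (rule keys_bound_div[OF p' b])
    ultimately have "p' = 0" using Suc.IH by blast
    then show "p = 0" by (simp add: p')
  qed
qed

lemma th_inj:
  assumes "x \<noteq> y" "subst (thsig x y) p = (0::('v::finite,'k::field) mpoly)"
  shows "p = 0"
  using th_inj_aux[OF assms(1)] keys_bound_ex[of p y] assms(2) by blast

lemma diff_zero_aux: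
  assumes "x \<noteq> y"
  shows "\<forall>p::('v::finite,'k::field) mpoly. (\<forall>m\<in>Poly_Mapping.keys p. lk m x < n) \<longrightarrow> (var y - var x) * p = 0 \<longrightarrow> p = 0"
proof (induction n)
  case 0 then show ?case by auto
next
  case (Suc n)
  show ?case
  proof (intro allI impI)
    fix p :: "('v,'k) mpoly"
    assume b: "\<forall>m\<in>Poly_Mapping.keys p. lk m x < Suc n" and z: "(var y - var x) * p = 0"
    have "kill x ((var y - var x) * p) = var y * kill x p"
      using assms by (simp add: kill_def subst_mult subst_diff subst_var)
    then have "kill x p = 0" using z var_mult_zero by (metis kill_def subst_zero)
    then obtain p' where p': "p = var x * p'" using kill_zero_dvd by blast
    have "var x * ((var y - var x) * p') = 0" using z by (simp add: p' mult_ac)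
    then have "(var y - var x) * p' = 0" by (rule var_mult_zero)
    moreover have "\<forall>m\<in>Poly_Mapping.keys p'. lk m x < n" by (rule keys_bound_div[OF p' b])
    ultimately have "p' = 0" using Suc.IH by blast
    then show "p = 0" by (simp add: p')
  qed
qed

lemma diff_zero:
  assumes "x \<noteq> y" "(var y - var x) * p = (0::('v::finite,'k::field) mpoly)"
  shows "p = 0"
  using diff_zero_aux[OF assms(1)] keys_bound_ex[of p x] assms(2) by blast

lemma swp_th:
  assumes "x \<noteq> y"
  shows "subst (swp x y) (subst (thsig x y) p) = subst (thsig x y) (p :: ('v::finite,'k::field) mpoly)"
proof -
  have "(\<lambda>v. subst (swp x y) (thsig x y v)) = (thsig x y :: 'v \<Rightarrow> ('v,'k) mpoly)"
    using assms by (auto simp: fun_eq_iff swp_def thsig_def subst_add subst_mult subst_var add.commute mult.commute)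
  then show ?thesis by (simp add: subst_subst)
qed

lemma th_un:
  assumes "x \<noteq> y" "subst (thsig x y) a + subst (thsig x y) b * var y = (0::('v::finite,'k::field) mpoly)"
  shows "a = 0 \<and> b = 0"
proof -
  let ?t = "subst (thsig x y) :: ('v,'k) mpoly \<Rightarrow> _"
  have "subst (swp x y) (?t a + ?t b * var y) = 0" using assms(2) by (simp add: subst_zero)
  then have "?t a + ?t b * var x = 0"
    using assms(1) by (simp add: subst_add subst_mult swp_th subst_var swp_def)
  moreover have "(var y - var x) * ?t b = (?t a + ?t b * var y) - (?t a + ?t b * var x)"
    by (simp add: algebra_simps)
  ultimately have "(var y - var x) * ?t b = 0" using assms(2) by simp
  then have "?t b = 0" by (rule diff_zero[OF assms(1)])
  then have b: "b = 0" by (rule th_inj[OF assms(1)])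
  then have "?t a = 0" using assms(2) by (simp add: subst_zero)
  then have "a = 0" by (rule th_inj[OF assms(1)])
  with b show ?thesis by simp
qed

definition inM :: "'v \<Rightarrow> 'v \<Rightarrow> ('v::finite,'k::field) mpoly \<Rightarrow> bool" where
  "inM x y s \<longleftrightarrow> (\<exists>a b. s = subst (thsig x y) a + subst (thsig x y) b * var y)"

lemma inM_add: "inM x y s \<Longrightarrow> inM x y t \<Longrightarrow> inM x y (s + t)"
  unfolding inM_def
proof (elim exE)
  fix a b a' b' assume "s = subst (thsig x y) a + subst (thsig x y) b * var y"
    "t = subst (thsig x y) a' + subst (thsig x y) b' * var y"
  then have "s + t = subst (thsig x y) (a + a') + subst (thsig x y) (b + b') * var y"
    by (simp add: subst_add algebra_simps)
  then show "\<exists>a b. s + t = subst (thsig x y) a + subst (thsig x y) b * var y" by blast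
qed

lemma inM_diff: "inM x y s \<Longrightarrow> inM x y t \<Longrightarrow> inM x y (s - t)"
  unfolding inM_def
proof (elim exE)
  fix a b a' b' assume "s = subst (thsig x y) a + subst (thsig x y) b * var y"
    "t = subst (thsig x y) a' + subst (thsig x y) b' * var y"
  then have "s - t = subst (thsig x y) (a - a') + subst (thsig x y) (b - b') * var y"
    by (simp add: subst_diff algebra_simps)
  then show "\<exists>a b. s - t = subst (thsig x y) a + subst (thsig x y) b * var y" by blast
qed

lemma inM_th: "inM x y s \<Longrightarrow> inM x y (subst (thsig x y) c * s)"
  unfolding inM_def
proof (elim exE)
  fix a b assume "s = subst (thsig x y) a + subst (thsig x y) b * var y"
  then have "subst (thsig x y) c * s = subst (thsig x y) (c * a) + subst (thsig x y) (c * b) * var y"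
    by (simp add: subst_mult algebra_simps)
  then show "\<exists>a b. subst (thsig x y) c * s = subst (thsig x y) a + subst (thsig x y) b * var y" by blast
qed

lemma inM_y: "x \<noteq> y \<Longrightarrow> inM x y s \<Longrightarrow> inM x y (var y * s)"
  unfolding inM_def
proof (elim exE)
  fix a b assume xy: "x \<noteq> y" and s: "s = subst (thsig x y) a + subst (thsig x y) b * var y"
  have "var y * s = subst (thsig x y) (- (b * var y)) + subst (thsig x y) (a + b * var x) * var y"
    using xy by (simp add: s subst_mult subst_add subst_uminus subst_var thsig_def algebra_simps)
  then show "\<exists>a b. var y * s = subst (thsig x y) a + subst (thsig x y) b * var y" by blast
qed

lemma inM_var: "x \<noteq> y \<Longrightarrow> inM x y s \<Longrightarrow> inM x y (var w * s)"
proof -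
  assume xy: "x \<noteq> y" and s: "inM x y s"
  consider "w = y" | "w = x" | "w \<noteq> x" "w \<noteq> y" by blast
  then show ?thesis
  proof cases
    case 1 then show ?thesis using inM_y[OF xy s] by simp
  next
    case 2
    have "var w * s = subst (thsig x y) (var x) * s - var y * s"
      using 2 by (simp add: subst_var thsig_def algebra_simps)
    then show ?thesis using inM_diff[OF inM_th[OF s] inM_y[OF xy s]] by simp
  next
    case 3
    have "var w * s = subst (thsig x y) (var w) * s"
      using 3 by (simp add: subst_var thsig_def)
    then show ?thesis using inM_th[OF s] by simp
  qed
qed

lemma inM_pow: "x \<noteq> y \<Longrightarrow> inM x y s \<Longrightarrow> inM x y (var w ^ k * s)"
  by (induction k) (auto simp: mult.assoc intro: inM_var)

lemma inM_prod: "x \<noteq> y \<Longrightarrow> inM x y s \<Longrightarrow> inM x y ((\<Prod>w\<in>A. var w ^ k w) * s)"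
proof (induction A rule: infinite_finite_induct)
  case (insert a A)
  then show ?case by (simp add: mult.assoc inM_pow)
qed auto

lemma inM_all:
  assumes "x \<noteq> y"
  shows "inM x y (p::('v::finite,'k::field) mpoly)"
proof (induction p rule: poly_induct)
  case zero
  have "(0::('v,'k) mpoly) = subst (thsig x y) 0 + subst (thsig x y) 0 * var y" by (simp add: subst_zero)
  then show ?case unfolding inM_def by blast
next
  case (add p q) then show ?case by (rule inM_add)
next
  case (single m c)
  have one: "inM x y (1::('v,'k) mpoly)"
    unfolding inM_def by (rule exI[of _ 1], rule exI[of _ 0]) (simp add: subst_1 subst_zero)
  have "inM x y ((\<Prod>w\<in>UNIV. var w ^ lk m w) * (1::('v,'k) mpoly))" by (rule inM_prod[OF assms one, where A=UNIV and k="\<lambda>w. lk m w"])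
  then have "inM x y (subst (thsig x y) (C c) * ((\<Prod>w\<in>UNIV. var w ^ lk m w) * 1))" by (rule inM_th)
  moreover have "subst (thsig x y) (C c) * ((\<Prod>w\<in>UNIV. var w ^ lk m w) * 1) = (sg m c :: ('v,'k) mpoly)"
    by (simp add: subst_C C_monom[symmetric] monom_eq_mv mv_def)
  ultimately show ?case by simp
qed

lemma th_regular:
  assumes "x \<noteq> y" "regular_seq (fs :: ('v::finite,'k::field) mpoly list)"
  shows "regular_seq (map (subst (thsig x y)) fs)"
proof (rule transfer_regular[OF is_hom_subst _ _ assms(2)])
  show "\<exists>a b. (s::('v,'k) mpoly) = subst (thsig x y) a + subst (thsig x y) b * var y" for s
    using inM_all[OF assms(1), of s] unfolding inM_def .
  show "subst (thsig x y) a + subst (thsig x y) b * var y = 0 \<Longrightarrow> a = 0 \<and> b = (0::('v,'k) mpoly)" for a b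
    by (rule th_un[OF assms(1)])
qed



lemma mono_mem:
  assumes "(monom f :: ('v,'k::field) mpoly) \<in> gen_ideal (monom ` E)"
  shows "\<exists>e\<in>E. \<exists>d. f = e + d"
proof (rule ccontr)
  assume nd: "\<not> (\<exists>e\<in>E. \<exists>d. f = e + d)"
  from assms obtain A c where A: "finite A" "A \<subseteq> monom ` E" "(monom f :: ('v,'k) mpoly) = (\<Sum>g\<in>A. c g * g)"
    by (rule gen_ideal_elim)
  have "lk (monom f :: ('v,'k) mpoly) f = (\<Sum>g\<in>A. lk (c g * g) f)"
    unfolding A(3) by (simp add: lookup_sum)
  also have "\<dots> = 0"
  proof (rule sum.neutral, rule ballI)
    fix g assume "g \<in> A"
    then obtain e where e: "e \<in> E" "g = monom e" using A(2) by blast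
    have "lk (sg e 1 * c g) f = 0"
      by (rule lookup_single_mult_nodvd) (use nd e in auto)
    then show "lk (c g * g) f = 0" by (simp add: e monom_def mult.commute)
  qed
  finally show False by (simp add: monom_def)
qed

lemma mingen_in_E:
  assumes "I = gen_ideal ((monom :: _ \<Rightarrow> ('v,'k::field) mpoly) ` E)" "f \<in> mingen_exps I"
  shows "f \<in> E"
proof -
  have "(monom f :: ('v,'k) mpoly) \<in> I" using assms(2) by (simp add: mingen_exps_def)
  then obtain e d where e: "e \<in> E" "f = e + d" using mono_mem assms(1) by blast
  have "(monom e :: ('v,'k) mpoly) \<in> I" using e(1) assms(1) by (auto intro: gen_ideal_base)
  moreover have "(monom e :: ('v,'k) mpoly) dvd monom f" using e(2) by (rule exp_dvd_monom)
  ultimately have "e = f" using assms(2) unfolding mingen_exps_def by blast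
  then show ?thesis using e by simp
qed

lemma total_deg_univ: "total_deg (m :: 'v::finite \<Rightarrow>\<^sub>0 nat) = (\<Sum>v\<in>UNIV. lk m v)"
  unfolding total_deg_def by (rule sum.mono_neutral_left) (auto simp: in_keys_iff)

lemma total_deg_add: "total_deg (a + b :: 'v::finite \<Rightarrow>\<^sub>0 nat) = total_deg a + total_deg b"
  by (simp add: total_deg_univ lookup_add sum.distrib)

lemma total_deg_zero: "total_deg (d :: 'v::finite \<Rightarrow>\<^sub>0 nat) = 0 \<Longrightarrow> d = 0"
  by (rule poly_mapping_eqI) (simp add: total_deg_univ)

lemma gen_mingens:
  assumes "I = gen_ideal ((monom :: _ \<Rightarrow> ('v::finite,'k::field) mpoly) ` E)"
  shows "gen_ideal (mingens I) = I"
proof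
  have "mingens I \<subseteq> I" by (auto simp: mingens_def mingen_exps_def)
  then show "gen_ideal (mingens I) \<subseteq> I" using gen_ideal_subset[of "mingens I" "monom ` E"] assms by simp
next
  have "monom ` E \<subseteq> gen_ideal (mingens I)"
  proof
    fix z assume "z \<in> (monom :: _ \<Rightarrow> ('v,'k) mpoly) ` E"
    then obtain e where e: "e \<in> E" "z = monom e" by blast
    let ?S = "{m. (monom m :: ('v,'k) mpoly) \<in> I \<and> (\<exists>d. e = m + d)}"
    have "e \<in> ?S" using e assms by (auto intro!: gen_ideal_base exI[of _ 0])
    then obtain m where m: "m \<in> ?S" and least: "\<And>m'. m' \<in> ?S \<Longrightarrow> total_deg m \<le> total_deg m'"
      using ex_has_least_nat[of "\<lambda>m. m \<in> ?S" e total_deg] by blast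
    obtain d where d: "e = m + d" using m by blast
    have "m \<in> mingen_exps I"
      unfolding mingen_exps_def
    proof (intro CollectI conjI allI impI)
      show "(monom m :: ('v,'k) mpoly) \<in> I" using m by blast
    next
      fix m' assume m'I: "(monom m' :: ('v,'k) mpoly) \<in> I" and dv: "(monom m' :: ('v,'k) mpoly) dvd monom m"
      then obtain d' where d': "m = m' + d'" using monom_dvd_exp by blast
      have "m' \<in> ?S" using m'I d d' by (auto intro: exI[of _ "d' + d"] simp: add.assoc)
      then have "total_deg m \<le> total_deg m'" by (rule least)
      then have "total_deg d' = 0" using d' by (simp add: total_deg_add)
      then have "d' = 0" by (rule total_deg_zero)
      then show "m' = m" using d' by simp
    qed
    then have "(monom m :: ('v,'k) mpoly) \<in> gen_ideal (mingens I)"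
      by (auto simp: mingens_def intro: gen_ideal_base)
    then have "monom d * (monom m :: ('v,'k) mpoly) \<in> gen_ideal (mingens I)" by (rule gen_ideal_mult)
    then show "z \<in> gen_ideal (mingens I)" by (simp add: e d monom_add mult.commute)
  qed
  then show "I \<subseteq> gen_ideal (mingens I)" using gen_ideal_subset assms by blast
qed

lemma sub_single:
  fixes m :: "'v \<Rightarrow>\<^sub>0 nat"
  assumes "lk m v \<noteq> 0" shows "m = sg v 1 + (m - sg v 1)"
proof (intro poly_mapping_eqI)
  fix w show "lk m w = lk (sg v 1 + (m - sg v 1)) w"
  proof (cases "w = v")
    case True
    then show ?thesis using assms by (simp add: lookup_add lookup_minus)
  next
    case False
    then show ?thesis by (simp add: lookup_add lookup_minus lookup_single)
  qed
qed

lemma var_dvd_monom: "lk m v \<noteq> 0 \<Longrightarrow> var v dvd (monom m :: ('v,'k::field) mpoly)"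
  unfolding var_def by (rule exp_dvd_monom, rule sub_single)

lemma var_not_unit: "\<not> var v dvd (1 :: ('v,'k::field) mpoly)"
proof
  assume "var v dvd (1 :: ('v,'k) mpoly)"
  then have "(monom (sg v 1) :: ('v,'k) mpoly) dvd monom 0" by (simp add: var_def monom_zero)
  then obtain d :: "'v \<Rightarrow>\<^sub>0 nat" where "0 = sg v 1 + d" using monom_dvd_exp by blast
  then have "lk (0::'v \<Rightarrow>\<^sub>0 nat) v = lk (sg v 1 + d) v" by simp
  then show False by (simp add: lookup_add)
qed

lemma two_vars:
  assumes "squarefree_exp f" "total_deg f \<ge> 2"
  shows "\<exists>x y. x \<noteq> y \<and> lk f x = 1 \<and> lk f y = 1"
proof -
  have "total_deg f \<le> (\<Sum>v\<in>Poly_Mapping.keys f. 1)"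
    unfolding total_deg_def by (rule sum_mono) (use assms(1) in \<open>simp add: squarefree_exp_def\<close>)
  then have "card (Poly_Mapping.keys f) \<ge> 2" using assms(2) by simp
  then obtain x y where "x \<in> Poly_Mapping.keys f" "y \<in> Poly_Mapping.keys f" "x \<noteq> y"
    by (metis One_nat_def card_le_Suc0_iff_eq not_less_eq_eq numeral_2_eq_2 finite_keys)
  moreover have "lk f v = 1" if "v \<in> Poly_Mapping.keys f" for v
    using that assms(1) unfolding squarefree_exp_def in_keys_iff by (metis le_neq_implies_less less_one)
  ultimately show ?thesis by blast
qed

lemma subst_monom_fix:
  assumes "\<And>v. lk m v \<noteq> 0 \<Longrightarrow> \<sigma> v = var v"
  shows "subst \<sigma> (monom m :: ('v::finite,'k::field) mpoly) = monom m"
proof -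
  have "mv \<sigma> m = mv var m" unfolding mv_def
  proof (rule prod.cong)
    fix v show "\<sigma> v ^ lk m v = var v ^ lk m v" by (cases "lk m v = 0") (auto simp: assms)
  qed simp
  then show ?thesis by (simp add: subst_monom monom_eq_mv[symmetric])
qed

lemma th_monom_other:
  assumes "x \<noteq> y" "lk m x = 0" "lk m y = 0"
  shows "subst (thsig x y) (monom m :: ('v::finite,'k::field) mpoly) = monom m"
  by (rule subst_monom_fix) (use assms in \<open>auto simp: thsig_def\<close>)

lemma th_monom_f:
  assumes "x \<noteq> y" "lk f x = 1" "lk f y = 1"
  shows "subst (thsig x y) (monom (Poly_Mapping.update x 0 f) :: ('v::finite,'k::field) mpoly) = monom f"
proof -
  let ?g = "Poly_Mapping.update x 0 f"
  let ?h = "Poly_Mapping.update y 0 ?g"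
  have g: "?g = sg y 1 + ?h"
    by (intro poly_mapping_eqI) (use assms in \<open>auto simp: lookup_add lookup_update lookup_single when_def\<close>)
  have f: "f = sg x 1 + sg y 1 + ?h"
    by (intro poly_mapping_eqI) (use assms in \<open>auto simp: lookup_add lookup_update lookup_single when_def\<close>)
  have "subst (thsig x y) (monom ?h :: ('v,'k) mpoly) = monom ?h"
    by (rule th_monom_other) (use assms in \<open>auto simp: lookup_update\<close>)
  moreover have "subst (thsig x y) (var y :: ('v,'k) mpoly) = var x * var y"
    using assms by (simp add: subst_var thsig_def)
  moreover have "(monom ?g :: ('v,'k) mpoly) = var y * monom ?h"
    by (subst g) (simp only: monom_add var_def)
  ultimately have "subst (thsig x y) (monom ?g :: ('v,'k) mpoly) = var x * var y * monom ?h"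
    by (simp add: subst_mult)
  also have "\<dots> = monom f" by (subst (2) f) (simp only: monom_add var_def)
  finally show ?thesis .
qed



theorem lemma4p2:
  fixes I :: "('v::finite, 'k::field) mpoly set"
    and F :: "('v, 'k) mpoly"
  assumes "sqfree_monomial_ideal I"
    and "is_NCI I"
    and "F \<in> mingens I"
  shows "\<exists>G\<in>mingens I. G \<noteq> F \<and> (\<exists>h. \<not> h dvd 1 \<and> h dvd F \<and> h dvd G)"
proof (rule ccontr)
  assume neg: "\<not> ?thesis"
  from assms(3) obtain f where f: "f \<in> mingen_exps I" "F = monom f" by (auto simp: mingens_def)
  from assms(1) obtain E where E: "\<forall>m\<in>E. squarefree_exp m" "I = gen_ideal (monom ` E)"
    unfolding sqfree_monomial_ideal_def by blast
  have "f \<in> E" by (rule mingen_in_E[OF E(2) f(1)])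
  then have sqf: "squarefree_exp f" using E(1) by blast
  have deg: "total_deg f \<ge> 2" using assms(2) f(1) unfolding is_NCI_def by blast
  obtain x y where xy: "x \<noteq> y" "lk f x = 1" "lk f y = 1" using two_vars[OF sqf deg] by blast
  have disj: "lk g v = 0" if "g \<in> mingen_exps I" "g \<noteq> f" "lk f v \<noteq> 0" for g v
  proof (rule ccontr)
    assume gv: "lk g v \<noteq> 0"
    have "(monom g :: ('v,'k) mpoly) \<in> mingens I" using that(1) by (simp add: mingens_def)
    moreover have "(monom g :: ('v,'k) mpoly) \<noteq> F" using that(2) f(2) monom_inj by metis
    moreover have "\<not> var v dvd (1::('v,'k) mpoly)" by (rule var_not_unit)
    moreover have "var v dvd F" using that(3) f(2) var_dvd_monom by metis
    moreover have "var v dvd (monom g :: ('v,'k) mpoly)" using gv var_dvd_monom by metis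
    ultimately show False using neg by blast
  qed
  have "x \<in> Poly_Mapping.keys f" using xy(2) by (simp add: in_keys_iff)
  then have "x \<in> supp_ideal I" using f(1) unfolding supp_ideal_def by blast
  then have "is_CI (set_var_one x I)" using assms(2) unfolding is_NCI_def by blast
  then obtain fs :: "('v,'k) mpoly list" where fs: "regular_seq fs"
    "gen_ideal (set fs) = gen_ideal ((\<lambda>m. monom (Poly_Mapping.update x 0 m) :: ('v,'k) mpoly) ` mingen_exps I)"
    unfolding is_CI_def set_var_one_def by blast
  let ?t = "subst (thsig x y) :: ('v,'k) mpoly \<Rightarrow> _"
  have reg: "regular_seq (map ?t fs)" by (rule th_regular[OF xy(1) fs(1)])
  have img: "?t ` ((\<lambda>m. monom (Poly_Mapping.update x 0 m)) ` mingen_exps I) = mingens I"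
    unfolding mingens_def image_image
  proof (rule image_cong[OF refl])
    fix m assume m: "m \<in> mingen_exps I"
    show "?t (monom (Poly_Mapping.update x 0 m)) = monom m"
    proof (cases "m = f")
      case True
      then show ?thesis using th_monom_f[OF xy] by simp
    next
      case False
      have mx: "lk m x = 0" and my: "lk m y = 0" using disj[OF m False] xy by auto
      have "Poly_Mapping.update x 0 m = m"
        by (rule poly_mapping_eqI) (use mx in \<open>auto simp: lookup_update\<close>)
      then show ?thesis using th_monom_other[OF xy(1) mx my] by simp
    qed
  qed
  have "gen_ideal (set (map ?t fs)) = gen_ideal (?t ` set fs)" by simp
  also have "\<dots> = gen_ideal (mingens I)"
    using gen_ideal_hom_eq[OF is_hom_subst fs(2)] img by simp
  also have "\<dots> = I" by (rule gen_mingens[OF E(2)])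
  finally have "is_CI I" using reg unfolding is_CI_def by blast
  then show False using assms(2) unfolding is_NCI_def by blast
qed


end
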